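(* Let $n\ge3$, let the sites of an $n$-qubit chain be partitioned into nonempty consecutive intervals $L=\{1,\dots,a\}$, $C=\{a+1,\dots,a+k\}$, $R=\{a+k+1,\dots,n\}$, let $U$ be a Clifford unitary on the chain with symplectic matrix $W$, and suppose $W$ satisfies the left wall condition around $C$. If $G_{\mathrm{left}}\cap G_{\mathrm{right}}\neq\{0\}$, then there exist an operator $Q_C$ on the qubits of $C$ that is not proportional to the identity and a real number $\theta$ such that $Q=\mathbb{1}_L\otimes Q_C\otimes\mathbb{1}_R$ satisfies $UQU^\dagger=e^{i\theta}Q$ (a non-trivial local conserved, possibly phase-oscillating, quantity supported on $C$).
   Context: Pauli operators modulo phases are identified with $\mathbb{Z}_2^{2n}$ via $(p_1,q_1,\dots,p_n,q_n)\mapsto X^{p_1}Z^{q_1}\otimes\cdots\otimes X^{p_n}Z^{q_n}$; symplectic form $J=\bigoplus_{i=1}^n\begin{pmatrix}0&1\\1&0\end{pmatrix}$; a Clifford unitary $U$ induces $W\in\mathrm{Sp}(2n,\mathbb{Z}_2)$ (i.e. $WJW^T=J$) with $UP_bU^\dagger\propto P_{Wb}$. $V_S$ denotes vectors supported on the site set $S$, $\mathbb{Z}_2^{2n}=V_L\oplus V_C\oplus V_R$, vectors $(l,c,r)$, and $\pi_C$ the projection onto $V_C$. Left wall condition: for all $t\ge1$, $l\in V_L$: $W^t(l,0,0)\in V_L\oplus V_C\oplus\{0\}$. Internal subspaces: $G_{\mathrm{left}}=\pi_C\big(\mathrm{span}\{W^t(l,0,0):t\ge0,\ l\in V_L\}\big)$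 and $G_{\mathrm{right}}=\pi_C\big(\mathrm{span}\{W^t(0,0,r):t\ge0,\ r\in V_R\}\big)$. *)

theory Defs
  imports "Jordan_Normal_Form.Schur_Decomposition" "HOL-Library.Z2"
begin

(* Conventions: sites are 0-based, site i in {0..<n}.
   A vector b in Z_2^(2n) is a "bit vec" of dimension 2n; coordinate 2i is p_i and
   coordinate 2i+1 is q_i, i.e. coordinate j belongs to site j div 2. *)

definition kron :: "complex mat \<Rightarrow> complex mat \<Rightarrow> complex mat" where
  "kron A B = mat (dim_row A * dim_row B) (dim_col A * dim_col B)
     (\<lambda>(i,j). A $$ (i div dim_row B, j div dim_col B) * B $$ (i mod dim_row B, j mod dim_col B))"

definition pauliX :: "complex mat" where
  "pauliX = mat_of_rows_list 2 [[0,1],[1,0]]"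

definition pauliZ :: "complex mat" where
  "pauliZ = mat_of_rows_list 2 [[1,0],[0,-1]]"

definition site_pauli :: "bit \<Rightarrow> bit \<Rightarrow> complex mat" where
  "site_pauli p q = (if p = 1 then pauliX else 1\<^sub>m 2) * (if q = 1 then pauliZ else 1\<^sub>m 2)"

fun pauli :: "nat \<Rightarrow> bit vec \<Rightarrow> complex mat" where
  "pauli 0 b = 1\<^sub>m 1"
| "pauli (Suc m) b = kron (pauli m b) (site_pauli (b $ (2*m)) (b $ (2*m+1)))"

(* symplectic form J = direct sum of [[0,1],[1,0]] *)
definition sympJ :: "nat \<Rightarrow> bit mat" where
  "sympJ n = mat (2*n) (2*n) (\<lambda>(i,j). if i div 2 = j div 2 \<and> i \<noteq> j then 1 else 0)"

definition symplectic :: "nat \<Rightarrow> bit mat \<Rightarrow> bool" where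
  "symplectic n W \<longleftrightarrow> W \<in> carrier_mat (2*n) (2*n) \<and> W * sympJ n * transpose_mat W = sympJ n"

definition unitary_mat :: "nat \<Rightarrow> complex mat \<Rightarrow> bool" where
  "unitary_mat d U \<longleftrightarrow> U \<in> carrier_mat d d \<and> U * mat_adjoint U = 1\<^sub>m d \<and> mat_adjoint U * U = 1\<^sub>m d"

definition clifford_with :: "nat \<Rightarrow> complex mat \<Rightarrow> bit mat \<Rightarrow> bool" where
  "clifford_with n U W \<longleftrightarrow> unitary_mat (2^n) U \<and> symplectic n W \<and>
     (\<forall>b \<in> carrier_vec (2*n). \<exists>c::complex.
        U * pauli n b * mat_adjoint U = c \<cdot>\<^sub>m pauli n (W *\<^sub>v b))"

definition Vsub :: "nat \<Rightarrow> nat set \<Rightarrow> bit vec set" where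
  "Vsub n S = {v \<in> carrier_vec (2*n). \<forall>j < 2*n. j div 2 \<notin> S \<longrightarrow> v $ j = 0}"

definition projS :: "nat \<Rightarrow> nat set \<Rightarrow> bit vec \<Rightarrow> bit vec" where
  "projS n S v = vec (2*n) (\<lambda>j. if j div 2 \<in> S then v $ j else 0)"

(* Z_2-linear span of a set of vectors of dimension d (scalars are only 0 and 1) *)
inductive_set z2span :: "nat \<Rightarrow> bit vec set \<Rightarrow> bit vec set" for d S where
  zero: "0\<^sub>v d \<in> z2span d S"
| add: "v \<in> S \<Longrightarrow> w \<in> z2span d S \<Longrightarrow> v + w \<in> z2span d S"

definition left_wall :: "nat \<Rightarrow> bit mat \<Rightarrow> nat set \<Rightarrow> nat set \<Rightarrow> bool" where
  "left_wall n W L C \<longleftrightarrow> (\<forall>t \<ge> 1. \<forall>l \<in> Vsub n L. (W ^\<^sub>m t) *\<^sub>v l \<in> Vsub n (L \<union> C))"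

definition G_int :: "nat \<Rightarrow> bit mat \<Rightarrow> nat set \<Rightarrow> nat set \<Rightarrow> bit vec set" where
  "G_int n W Side C = projS n C ` z2span (2*n) {(W ^\<^sub>m t) *\<^sub>v v | t v. v \<in> Vsub n Side}"

end

theory Submission
  imports Defs
begin


lemma kron_carrier[simp]: "kron A B \<in> carrier_mat (dim_row A * dim_row B) (dim_col A * dim_col B)"
  unfolding kron_def by auto

lemma kron_dims[simp]: "dim_row (kron A B) = dim_row A * dim_row B" "dim_col (kron A B) = dim_col A * dim_col B"
  unfolding kron_def by auto

lemma kron_index[simp]: "i < dim_row A * dim_row B \<Longrightarrow> j < dim_col A * dim_col B \<Longrightarrow>
  kron A B $$ (i,j) = A $$ (i div dim_row B, j div dim_col B) * B $$ (i mod dim_row B, j mod dim_col B)"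
  unfolding kron_def by auto

lemma div_lt_aux: "i < a * (b::nat) \<Longrightarrow> i div b < a"
  by (simp add: less_mult_imp_div_less)

lemma mod_lt_aux: "i < a * (b::nat) \<Longrightarrow> i mod b < b"
  by (cases "b = 0", auto)

lemma kron_assoc:
  assumes "dim_row B > 0" "dim_col B > 0" "dim_row C > 0" "dim_col C > 0"
  shows "kron (kron A B) C = kron A (kron B C)"
proof (rule eq_matI)
  fix i j assume i: "i < dim_row (kron A (kron B C))" and j: "j < dim_col (kron A (kron B C))"
  let ?rB = "dim_row B" and ?rC = "dim_row C" and ?cB = "dim_col B" and ?cC = "dim_col C"
  have i': "i < dim_row A * ?rB * ?rC" "i < dim_row A * (?rB * ?rC)" using i by (auto simp: ac_simps)
  have j': "j < dim_col A * ?cB * ?cC" "j < dim_col A * (?cB * ?cC)" using j by (auto simp: ac_simps)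
  have e1: "i div ?rC div ?rB = i div (?rB * ?rC)" by (simp add: div_mult2_eq mult.commute[of ?rB])
  have e2: "j div ?cC div ?cB = j div (?cB * ?cC)" by (simp add: div_mult2_eq mult.commute[of ?cB])
  have m1: "i mod (?rB * ?rC) = ?rC * (i div ?rC mod ?rB) + i mod ?rC"
    by (simp add: mod_mult2_eq mult.commute[of ?rB])
  have m2: "j mod (?cB * ?cC) = ?cC * (j div ?cC mod ?cB) + j mod ?cC"
    by (simp add: mod_mult2_eq mult.commute[of ?cB])
  have e3: "i mod (?rB * ?rC) div ?rC = i div ?rC mod ?rB" "i mod (?rB * ?rC) mod ?rC = i mod ?rC"
    unfolding m1 using assms by auto
  have e4: "j mod (?cB * ?cC) div ?cC = j div ?cC mod ?cB" "j mod (?cB * ?cC) mod ?cC = j mod ?cC"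
    unfolding m2 using assms by auto
  have l1: "i div ?rC < dim_row A * ?rB" using i'(1) by (simp add: div_lt_aux)
  have l2: "j div ?cC < dim_col A * ?cB" using j'(1) by (simp add: div_lt_aux)
  have l3: "i mod (?rB * ?rC) < ?rB * ?rC" "j mod (?cB * ?cC) < ?cB * ?cC" using assms by auto
  show "kron (kron A B) C $$ (i, j) = kron A (kron B C) $$ (i, j)"
    using i' j' l1 l2 l3 by (simp add: e1 e2 e3 e4 ac_simps)
next
  show "dim_row (kron (kron A B) C) = dim_row (kron A (kron B C))" by simp
next
  show "dim_col (kron (kron A B) C) = dim_col (kron A (kron B C))" by simp
qed

lemma kron_one_one: "p > 0 \<Longrightarrow> q > 0 \<Longrightarrow> kron (1\<^sub>m p) (1\<^sub>m q) = 1\<^sub>m (p * q)"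
proof (rule eq_matI)
  fix i j assume "p > 0" "q > 0" and i: "i < dim_row (1\<^sub>m (p * q))" and j: "j < dim_col (1\<^sub>m (p * q))"
  then have "i < p * q" "j < p * q" by auto
  moreover have "(i div q = j div q \<and> i mod q = j mod q) = (i = j)"
    by (metis div_mult_mod_eq)
  ultimately show "kron (1\<^sub>m p) (1\<^sub>m q) $$ (i, j) = 1\<^sub>m (p * q) $$ (i, j)"
    using \<open>q > 0\<close> by (auto simp: div_lt_aux)
qed auto

lemma kron_one_left: "kron (1\<^sub>m 1) A = A"
  by (rule eq_matI, auto)

lemma kron_one_right: "kron A (1\<^sub>m 1) = A"
  by (rule eq_matI, auto)



lemma bit_cases2: "(b::bit) = 0 \<or> b = 1"
  by (metis (full_types) bit_not_one_iff)

definition spf :: "bit \<Rightarrow> bit \<Rightarrow> nat \<times> nat \<Rightarrow> complex" where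
  "spf p q = (\<lambda>(x,y). if (x = y) = (p = 0) then (if q = 1 \<and> y = 1 then -1 else 1) else 0)"

lemma pauliX_eq: "pauliX = mat 2 2 (spf 1 0)"
  unfolding pauliX_def mat_of_rows_list_def spf_def
  by (rule eq_matI, auto simp: less_2_cases_iff)

lemma pauliZ_eq: "pauliZ = mat 2 2 (spf 0 1)"
  unfolding pauliZ_def mat_of_rows_list_def spf_def
  by (rule eq_matI, auto simp: less_2_cases_iff)

lemma one2_eq: "1\<^sub>m 2 = mat 2 2 (spf 0 0)"
  unfolding spf_def
  by (rule eq_matI, auto simp: less_2_cases_iff)

lemma sum2: "(\<Sum>i\<in>{0..<2::nat}. f i) = f 0 + f 1"
  by (simp add: numeral_2_eq_2)

lemma site_pauli_eq: "site_pauli p q = mat 2 2 (spf p q)"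
proof -
  have XZ: "mat 2 2 (spf 1 0) * mat 2 2 (spf 0 1) = mat 2 2 (spf 1 1)"
    by (rule eq_matI, auto simp: less_2_cases_iff scalar_prod_def sum2 spf_def)
  show ?thesis
  using bit_cases2[of p] bit_cases2[of q]
  apply (elim disjE)
  by (auto simp: site_pauli_def XZ pauliX_eq pauliZ_eq one2_eq[symmetric])
qed

lemma site_pauli_carrier[simp]: "site_pauli p q \<in> carrier_mat 2 2"
  unfolding site_pauli_eq by auto

lemma site_pauli_dims[simp]: "dim_row (site_pauli p q) = 2" "dim_col (site_pauli p q) = 2"
  unfolding site_pauli_eq by auto

lemma site_pauli_00: "site_pauli 0 0 = 1\<^sub>m 2"
  unfolding site_pauli_def by simp

lemma site_pauli_index: "x < 2 \<Longrightarrow> y < 2 \<Longrightarrow> site_pauli p q $$ (x,y) = spf p q (x,y)"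
  unfolding site_pauli_eq by simp


lemma pauli_carrier[simp]: "pauli m b \<in> carrier_mat (2^m) (2^m)"
  by (induct m, auto)

lemma pauli_dims[simp]: "dim_row (pauli m b) = 2^m" "dim_col (pauli m b) = 2^m"
  using carrier_matD[OF pauli_carrier[of m b]] by auto

lemma kron_one_right': "kron A (1\<^sub>m (Suc 0)) = A"
  using kron_one_right by simp

lemma pauli_cong: "(\<And>j. j < 2*m \<Longrightarrow> b $ j = c $ j) \<Longrightarrow> pauli m b = pauli m c"
proof (induct m)
  case (Suc m)
  then show ?case by simp
qed simp

lemma pauli_zero_prefix: "(\<And>j. j < 2*m \<Longrightarrow> b $ j = 0) \<Longrightarrow> pauli m b = 1\<^sub>m (2^m)"
proof (induct m)
  case (Suc m)
  then have "pauli m b = 1\<^sub>m (2^m)" by simp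
  moreover have "b $ (2*m) = 0" "b $ (2*m+1) = 0" using Suc(2) by auto
  ultimately show ?case by (simp add: site_pauli_00 kron_one_one mult.commute)
qed simp

lemma pauli_tail: "(\<And>j. 2*m \<le> j \<Longrightarrow> j < 2*(m+r) \<Longrightarrow> b $ j = 0) \<Longrightarrow>
  pauli (m+r) b = kron (pauli m b) (1\<^sub>m (2^r))"
proof (induct r)
  case 0
  then show ?case by (simp add: kron_one_right')
next
  case (Suc r)
  then have IH: "pauli (m+r) b = kron (pauli m b) (1\<^sub>m (2^r))" by simp
  have "b $ (2*(m+r)) = 0" "b $ (2*(m+r)+1) = 0" using Suc(2) by auto
  then have "pauli (m + Suc r) b = kron (kron (pauli m b) (1\<^sub>m (2^r))) (1\<^sub>m 2)"
    using IH by (simp add: site_pauli_00)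
  also have "\<dots> = kron (pauli m b) (kron (1\<^sub>m (2^r)) (1\<^sub>m 2))"
    by (rule kron_assoc, auto)
  also have "\<dots> = kron (pauli m b) (1\<^sub>m (2^Suc r))"
    by (simp add: kron_one_one mult.commute)
  finally show ?case .
qed

lemma pauli_shift: "(\<And>j. j < 2*a \<Longrightarrow> b $ j = 0) \<Longrightarrow> (\<And>i. i < 2*m \<Longrightarrow> c $ i = b $ (2*a+i)) \<Longrightarrow>
  pauli (a+m) b = kron (1\<^sub>m (2^a)) (pauli m c)"
proof (induct m)
  case 0
  then show ?case by (simp add: kron_one_right' pauli_zero_prefix)
next
  case (Suc m)
  then have IH: "pauli (a+m) b = kron (1\<^sub>m (2^a)) (pauli m c)" by simp
  have e: "b $ (2*(a+m)) = c $ (2*m)" "b $ (2*(a+m)+1) = c $ (2*m+1)" using Suc(3)[of "2*m"] Suc(3)[of "2*m+1"]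
    by (auto simp: algebra_simps)
  have "pauli (a + Suc m) b = kron (kron (1\<^sub>m (2^a)) (pauli m c)) (site_pauli (c $ (2*m)) (c $ (2*m+1)))"
    using IH e by simp
  also have "\<dots> = kron (1\<^sub>m (2^a)) (kron (pauli m c) (site_pauli (c $ (2*m)) (c $ (2*m+1))))"
    by (rule kron_assoc, auto)
  finally show ?case by simp
qed

definition ns :: "nat \<Rightarrow> complex mat \<Rightarrow> bool" where
  "ns d M \<longleftrightarrow> (\<exists>i<d. \<exists>l<d. i \<noteq> l \<and> M $$ (i,l) \<noteq> 0) \<or> (\<exists>i<d. \<exists>l<d. M $$ (i,i) \<noteq> M $$ (l,l))"

lemma ns_not_scalar: "ns d M \<Longrightarrow> \<not> (\<exists>c. M = c \<cdot>\<^sub>m 1\<^sub>m d)"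
proof
  assume "ns d M" "\<exists>c. M = c \<cdot>\<^sub>m 1\<^sub>m d"
  then obtain c where c: "M = c \<cdot>\<^sub>m 1\<^sub>m d" by blast
  have "\<And>i l. i < d \<Longrightarrow> l < d \<Longrightarrow> M $$ (i,l) = (if i = l then c else 0)"
    unfolding c by simp
  then show False using \<open>ns d M\<close> unfolding ns_def by force
qed

lemma ns_nonzero: "ns d M \<Longrightarrow> \<exists>i<d. \<exists>l<d. M $$ (i,l) \<noteq> 0"
  unfolding ns_def by metis

lemma spf_nz: "\<exists>x<2. \<exists>y<2. spf p q (x,y) \<noteq> 0"
proof (cases "p = 0")
  case True
  then show ?thesis by (intro exI[of _ 0], simp add: spf_def)
next
  case False
  then show ?thesis by (intro exI[of _ 0], simp, intro exI[of _ 1], simp add: spf_def)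
qed

lemma kron_sp_index:
  assumes "M \<in> carrier_mat d d" "i < d" "l < d" "x < 2" "y < 2"
  shows "kron M (site_pauli p q) $$ (2*i+x, 2*l+y) = M $$ (i,l) * spf p q (x,y)"
proof -
  have "2*i+x < d*2" "2*l+y < d*2" using assms by auto
  then show ?thesis using assms by (simp add: site_pauli_index)
qed

lemma spf_01: "p \<noteq> 0 \<Longrightarrow> spf p q (0,1) \<noteq> 0"
  by (simp add: spf_def)

lemma spf_00: "p = 0 \<Longrightarrow> spf p q (0,0) = 1"
  by (simp add: spf_def)

lemma ns_kron:
  assumes ns: "ns d M" and M: "M \<in> carrier_mat d d"
  shows "ns (d*2) (kron M (site_pauli p q))"
proof -
  let ?K = "kron M (site_pauli p q)"
  from ns consider (A) i l where "i<d" "l<d" "i\<noteq>l" "M $$ (i,l) \<noteq> 0"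
    | (B) i l where "i<d" "l<d" "M $$ (i,i) \<noteq> M $$ (l,l)" unfolding ns_def by blast
  then show ?thesis
  proof cases
    case A
    obtain x y where xy: "x<2" "y<2" "spf p q (x,y) \<noteq> 0" using spf_nz by blast
    have "?K $$ (2*i+x, 2*l+y) \<noteq> 0" using kron_sp_index[OF M A(1,2) xy(1,2)] A xy by simp
    moreover have "2*i+x \<noteq> 2*l+y" using A xy by auto
    moreover have "2*i+x < d*2" "2*l+y < d*2" using A xy by auto
    ultimately show ?thesis unfolding ns_def by blast
  next
    case B
    show ?thesis
    proof (cases "p = 0")
      case True
      have "?K $$ (2*i+0, 2*i+0) \<noteq> ?K $$ (2*l+0, 2*l+0)"
        using kron_sp_index[OF M B(1) B(1), of 0 0 p q] kron_sp_index[OF M B(2) B(2), of 0 0 p q] B spf_00[OF True]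
        by simp
      moreover have "2*i+0 < d*2" "2*l+0 < d*2" using B by auto
      ultimately show ?thesis unfolding ns_def by blast
    next
      case False
      obtain t where t: "t < d" "M $$ (t,t) \<noteq> 0" using B by metis
      have "?K $$ (2*t+0, 2*t+1) \<noteq> 0" using kron_sp_index[OF M t(1) t(1), of 0 1 p q] t spf_01[OF False] by simp
      moreover have "2*t+0 < d*2" "2*t+1 < d*2" "2*t+0 \<noteq> 2*t+1" using t by auto
      ultimately show ?thesis unfolding ns_def by blast
    qed
  qed
qed

lemma ns_kron_one:
  assumes "p \<noteq> 0 \<or> q \<noteq> 0"
  shows "ns (2^m*2) (kron (1\<^sub>m (2^m)) (site_pauli p q))"
proof -
  let ?K = "kron (1\<^sub>m (2^m)) (site_pauli p q)"
  have idx: "?K $$ (x,y) = spf p q (x,y)" if "x<2" "y<2" for x y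
    using kron_sp_index[of "1\<^sub>m (2^m)" "2^m" 0 0 x y p q] that by simp
  have "(1::nat) \<le> 2^m" by simp
  then have lt: "(0::nat) < 2^m*2" "(1::nat) < 2^m*2" by linarith+
  show ?thesis
  proof (cases "p = 0")
    case True
    then have "q = 1" using assms bit_cases2[of q] by auto
    then have "?K $$ (0,0) \<noteq> ?K $$ (1,1)" using idx[of 0 0] idx[of 1 1] True by (simp add: spf_def)
    then show ?thesis unfolding ns_def using lt by blast
  next
    case False
    then have "?K $$ (0,1) \<noteq> 0" using idx[of 0 1] spf_01 by simp
    then show ?thesis unfolding ns_def using lt by (metis zero_neq_one)
  qed
qed

lemma ns_pauli: "(\<exists>j<2*m. b $ j \<noteq> 0) \<Longrightarrow> ns (2^m) (pauli m b)"
proof (induct m)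
  case 0
  then show ?case by simp
next
  case (Suc m)
  show ?case
  proof (cases "\<exists>j<2*m. b $ j \<noteq> 0")
    case True
    then have "ns (2^m) (pauli m b)" using Suc by simp
    from ns_kron[OF this pauli_carrier]
    show ?thesis by (simp add: mult.commute)
  next
    case False
    then have P: "pauli m b = 1\<^sub>m (2^m)" by (intro pauli_zero_prefix, auto)
    obtain j where j: "j < 2 * Suc m" "b $ j \<noteq> 0" using Suc(2) by blast
    have "\<not> j < 2*m" using False j by auto
    then have "j = 2*m \<or> j = 2*m+1" using j by presburger
    then have "b $ (2*m) \<noteq> 0 \<or> b $ (2*m+1) \<noteq> 0" using j by auto
    from ns_kron_one[OF this, of m] P show ?thesis by (simp add: mult.commute)
  qed
qed



declare mult_bit_eq_and[simp del] add_bit_eq_xor[simp del]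

lemma assoc3: "A \<in> carrier_mat d d \<Longrightarrow> B \<in> carrier_mat d d \<Longrightarrow> C \<in> carrier_mat d d \<Longrightarrow>
  A * B * C = A * (B * C)"
  by (rule assoc_mult_mat, auto)

definition partner :: "nat \<Rightarrow> nat" where
  "partner j = (if even j then Suc j else j - 1)"

lemma partner_div[simp]: "partner j div 2 = j div 2"
  unfolding partner_def by (cases "even j", simp_all add: even_iff_mod_2_eq_zero; presburger)

lemma partner_partner[simp]: "partner (partner j) = j"
  unfolding partner_def by (cases "even j", simp_all add: even_iff_mod_2_eq_zero; presburger)

lemma partner_lt: "j < 2*n \<Longrightarrow> partner j < 2*n"
  unfolding partner_def by (cases "even j", simp_all add: even_iff_mod_2_eq_zero; presburger)

lemma partner_iff: "(l div 2 = i div 2 \<and> i \<noteq> l) = (l = partner i)"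
  unfolding partner_def by (cases "even i", simp_all add: even_iff_mod_2_eq_zero; presburger)

lemma sympJ_carrier[simp]: "sympJ n \<in> carrier_mat (2*n) (2*n)"
  unfolding sympJ_def by auto

lemma sympJ_dims[simp]: "dim_row (sympJ n) = 2*n" "dim_col (sympJ n) = 2*n"
  unfolding sympJ_def by auto

lemma sq_mult: "A \<in> carrier_mat d d \<Longrightarrow> B \<in> carrier_mat d d \<Longrightarrow> A * B \<in> carrier_mat d d"
  by (rule mult_carrier_mat)

lemma sympJ_index: "i < 2*n \<Longrightarrow> l < 2*n \<Longrightarrow> sympJ n $$ (i,l) = (if l = partner i then 1 else 0)"
  unfolding sympJ_def using partner_iff[of l i] by auto

lemma sum_single_bit: "p < (d::nat) \<Longrightarrow> (\<Sum>x\<in>{0..<d}. (if x = p then 1 else 0) * f x) = (f p :: bit)"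
proof -
  assume "p < d"
  have "(\<Sum>x\<in>{0..<d}. (if x = p then 1 else 0) * f x) = (\<Sum>x\<in>{0..<d}. if x = p then f x else 0)"
    by (rule sum.cong, auto)
  also have "\<dots> = f p" using \<open>p < d\<close> by (subst sum.delta, auto)
  finally show ?thesis .
qed

lemma sympJ_mult_vec: assumes y: "y \<in> carrier_vec (2*n)"
  shows "sympJ n *\<^sub>v y = vec (2*n) (\<lambda>i. y $ partner i)"
proof (rule eq_vecI)
  fix i assume "i < dim_vec (vec (2*n) (\<lambda>i. y $ partner i))"
  then have i: "i < 2*n" by simp
  have dy: "dim_vec y = 2*n" using y by simp
  have "(sympJ n *\<^sub>v y) $ i = row (sympJ n) i \<bullet> y" using i by simp
  also have "\<dots> = (\<Sum>l\<in>{0..<2*n}. sympJ n $$ (i,l) * y $ l)"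
    unfolding scalar_prod_def dy using i by (intro sum.cong, auto)
  also have "\<dots> = (\<Sum>l\<in>{0..<2*n}. (if l = partner i then 1 else 0) * y $ l)"
    using i by (intro sum.cong, auto simp: sympJ_index)
  also have "\<dots> = y $ partner i" by (rule sum_single_bit[OF partner_lt[OF i]])
  finally show "(sympJ n *\<^sub>v y) $ i = vec (2*n) (\<lambda>i. y $ partner i) $ i" using i by simp
qed simp

lemma sympJ_sq: "sympJ n * sympJ n = 1\<^sub>m (2*n)"
proof (rule eq_matI)
  fix i l assume i: "i < dim_row (1\<^sub>m (2*n))" and l: "l < dim_col (1\<^sub>m (2*n))"
  then have i: "i < 2*n" and l: "l < 2*n" by auto
  have "(sympJ n * sympJ n) $$ (i,l) = row (sympJ n) i \<bullet> col (sympJ n) l" using i l by simp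
  also have "\<dots> = (\<Sum>x\<in>{0..<2*n}. sympJ n $$ (i,x) * sympJ n $$ (x,l))"
    unfolding scalar_prod_def using i l by (intro sum.cong, auto)
  also have "\<dots> = (\<Sum>x\<in>{0..<2*n}. (if x = partner i then 1 else 0) * sympJ n $$ (x,l))"
    using i by (intro sum.cong, auto simp: sympJ_index)
  also have "\<dots> = sympJ n $$ (partner i, l)" by (rule sum_single_bit[OF partner_lt[OF i]])
  also have "\<dots> = 1\<^sub>m (2*n) $$ (i,l)" using i l partner_lt[OF i] by (auto simp: sympJ_index)
  finally show "(sympJ n * sympJ n) $$ (i,l) = 1\<^sub>m (2*n) $$ (i,l)" .
qed auto

lemma symp_inv:
  assumes "symplectic n W"
  defines "Wi \<equiv> sympJ n * transpose_mat W * sympJ n"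
  shows "Wi \<in> carrier_mat (2*n) (2*n)" "W * Wi = 1\<^sub>m (2*n)" "Wi * W = 1\<^sub>m (2*n)"
    "transpose_mat W * sympJ n * W = sympJ n"
proof -
  let ?J = "sympJ n"
  have W: "W \<in> carrier_mat (2*n) (2*n)" and eq: "W * ?J * transpose_mat W = ?J"
    using assms unfolding symplectic_def by auto
  have WT: "transpose_mat W \<in> carrier_mat (2*n) (2*n)" using W by auto
  have J: "?J \<in> carrier_mat (2*n) (2*n)" by simp
  have JW: "?J * transpose_mat W \<in> carrier_mat (2*n) (2*n)" using J WT by (rule mult_carrier_mat)
  have WJ: "W * ?J \<in> carrier_mat (2*n) (2*n)" using W J by (rule mult_carrier_mat)
  show Wi: "Wi \<in> carrier_mat (2*n) (2*n)" unfolding Wi_def using JW J by (rule mult_carrier_mat)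
  have "W * Wi = (W * ?J * transpose_mat W) * ?J" unfolding Wi_def
    using assoc3[OF W JW J] assoc3[OF W J WT] by simp
  also have "\<dots> = 1\<^sub>m (2*n)" unfolding eq by (rule sympJ_sq)
  finally show WWi: "W * Wi = 1\<^sub>m (2*n)" .
  show WiW: "Wi * W = 1\<^sub>m (2*n)" by (rule mat_mult_left_right_inverse[OF W Wi WWi])
  have WTJ: "transpose_mat W * ?J \<in> carrier_mat (2*n) (2*n)" using WT J by (rule mult_carrier_mat)
  have "?J * ?J * (transpose_mat W * ?J * W) = ?J * (?J * (transpose_mat W * ?J * W))"
    using assoc3[OF J J mult_carrier_mat[OF WTJ W]] .
  also have "?J * (transpose_mat W * ?J * W) = ?J * transpose_mat W * ?J * W"
    using assoc3[OF J WT J] assoc3[OF J WTJ W] assoc3[OF JW J W] by simp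
  also have "\<dots> = Wi * W" unfolding Wi_def ..
  finally have "?J * ?J * (transpose_mat W * ?J * W) = ?J * (Wi * W)" .
  also have "\<dots> = ?J" unfolding WiW using J by (rule right_mult_one_mat)
  finally show "transpose_mat W * ?J * W = ?J" unfolding sympJ_sq using W WT by simp
qed

lemma pow_Suc_left: "A \<in> carrier_mat d d \<Longrightarrow> A ^\<^sub>m Suc t = A * A ^\<^sub>m t"
proof (induct t)
  case 0 then show ?case by simp
next
  case (Suc t)
  have "A ^\<^sub>m Suc (Suc t) = (A * A ^\<^sub>m t) * A" using Suc by simp
  also have "\<dots> = A * (A ^\<^sub>m t * A)" using Suc(2) by (intro assoc3, auto)
  finally show ?case by simp
qed

lemma pow_add_mat: "A \<in> carrier_mat d d \<Longrightarrow> A ^\<^sub>m (s + t) = A ^\<^sub>m s * A ^\<^sub>m t"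
proof (induct t)
  case 0 then show ?case by simp
next
  case (Suc t)
  have "A ^\<^sub>m (s + Suc t) = (A ^\<^sub>m s * A ^\<^sub>m t) * A" using Suc by simp
  also have "\<dots> = A ^\<^sub>m s * (A ^\<^sub>m t * A)" using Suc(2) by (intro assoc3, auto)
  finally show ?case by simp
qed

lemma pow_mult_mat: "A \<in> carrier_mat d d \<Longrightarrow> A ^\<^sub>m (s * t) = (A ^\<^sub>m s) ^\<^sub>m t"
proof (induct t)
  case 0 then show ?case by simp
next
  case (Suc t)
  have "A ^\<^sub>m (s * Suc t) = A ^\<^sub>m (s * t + s)" by (simp add: ac_simps)
  also have "\<dots> = (A ^\<^sub>m s) ^\<^sub>m t * A ^\<^sub>m s" using Suc by (simp add: pow_add_mat)
  finally show ?case by simp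
qed

lemma pow_one_mat: "(1\<^sub>m d) ^\<^sub>m t = (1\<^sub>m d :: 'a::semiring_1 mat)"
  by (induct t, auto)

lemma symp_pow:
  fixes W :: "'a::comm_ring_1 mat"
  assumes W: "W \<in> carrier_mat d d" and J: "J \<in> carrier_mat d d" and s: "transpose_mat W * J * W = J"
  shows "transpose_mat (W ^\<^sub>m t) * J * W ^\<^sub>m t = J"
proof (induct t)
  case 0 then show ?case using W J by simp
next
  case (Suc t)
  have c: "W ^\<^sub>m t \<in> carrier_mat d d" "transpose_mat (W ^\<^sub>m t) \<in> carrier_mat d d"
     "transpose_mat W \<in> carrier_mat d d" using W by auto
  have "transpose_mat (W ^\<^sub>m Suc t) * J * W ^\<^sub>m Suc t
     = transpose_mat W * (transpose_mat (W ^\<^sub>m t) * J * W ^\<^sub>m t) * W"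
    using c W J by (simp add: transpose_mult[OF c(1) W] assoc3[of _ d] sq_mult)
  then show ?case using Suc s by simp
qed

lemma scalar_transpose: assumes M: "(M :: 'a::comm_semiring_0 mat) \<in> carrier_mat d d"
  and x: "x \<in> carrier_vec d" and z: "z \<in> carrier_vec d"
  shows "(M *\<^sub>v x) \<bullet> z = x \<bullet> (transpose_mat M *\<^sub>v z)"
proof -
  have "(M *\<^sub>v x) \<bullet> z = z \<bullet> (M *\<^sub>v x)" using M x z by (intro comm_scalar_prod[of _ d], auto)
  also have "\<dots> = (transpose_mat M *\<^sub>v z) \<bullet> x" using transpose_vec_mult_scalar[OF M x z] by simp
  also have "\<dots> = x \<bullet> (transpose_mat M *\<^sub>v z)" using M x z by (intro comm_scalar_prod[of _ d], auto)
  finally show ?thesis .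
qed

lemma sip_invariant:
  assumes M: "(M :: 'a::comm_semiring_0 mat) \<in> carrier_mat d d" and J: "J \<in> carrier_mat d d"
    and s: "transpose_mat M * J * M = J"
    and x: "x \<in> carrier_vec d" and y: "y \<in> carrier_vec d"
  shows "(M *\<^sub>v x) \<bullet> (J *\<^sub>v (M *\<^sub>v y)) = x \<bullet> (J *\<^sub>v y)"
proof -
  have "(M *\<^sub>v x) \<bullet> (J *\<^sub>v (M *\<^sub>v y)) = x \<bullet> (transpose_mat M *\<^sub>v (J *\<^sub>v (M *\<^sub>v y)))"
    using M J x y by (intro scalar_transpose, auto)
  also have "transpose_mat M *\<^sub>v (J *\<^sub>v (M *\<^sub>v y)) = (transpose_mat M * J * M) *\<^sub>v y"
    using M J y by (simp add: assoc_mult_mat_vec[of _ d d _ d] sq_mult)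
  finally show ?thesis unfolding s .
qed

lemma finite_UNIV_bit: "finite (UNIV :: bit set)"
  by (rule finite_subset[of _ "{0,1}"], use bit_cases2 in auto)

lemma finite_bit_mats: "finite (carrier_mat r c :: bit mat set)"
proof -
  let ?D = "{0..<r} \<times> {0..<c}"
  have "carrier_mat r c \<subseteq> (\<lambda>f. mat r c f) ` (?D \<rightarrow>\<^sub>E (UNIV :: bit set))"
  proof
    fix A :: "bit mat" assume A: "A \<in> carrier_mat r c"
    have "A = mat r c (restrict (\<lambda>ij. A $$ ij) ?D)"
      using A by (intro eq_matI, auto)
    moreover have "restrict (\<lambda>ij. A $$ ij) ?D \<in> ?D \<rightarrow>\<^sub>E UNIV" by auto
    ultimately show "A \<in> (\<lambda>f. mat r c f) ` (?D \<rightarrow>\<^sub>E UNIV)" by blast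
  qed
  moreover have "finite (?D \<rightarrow>\<^sub>E (UNIV :: bit set))"
    by (intro finite_PiE, auto simp: finite_UNIV_bit)
  ultimately show ?thesis by (meson finite_imageI finite_subset)
qed

lemma left_inv_pow:
  assumes W: "W \<in> carrier_mat d d" and Wi: "Wi \<in> carrier_mat d d" and inv: "Wi * W = 1\<^sub>m d"
  shows "Wi ^\<^sub>m t * W ^\<^sub>m t = 1\<^sub>m d"
proof (induct t)
  case 0 then show ?case using W Wi by simp
next
  case (Suc t)
  have e: "W ^\<^sub>m Suc t = W * W ^\<^sub>m t" by (rule pow_Suc_left[OF W])
  have "Wi ^\<^sub>m Suc t * W ^\<^sub>m Suc t = (Wi ^\<^sub>m t * Wi) * (W * W ^\<^sub>m t)" unfolding e by simp
  also have "\<dots> = Wi ^\<^sub>m t * (Wi * W) * W ^\<^sub>m t"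
    using W Wi by (simp add: assoc3[of _ d] sq_mult)
  finally have "Wi ^\<^sub>m Suc t * W ^\<^sub>m Suc t = Wi ^\<^sub>m t * (Wi * W) * W ^\<^sub>m t" .
  then show ?case using inv Suc W Wi by simp
qed

lemma finite_order:
  assumes W: "(W :: bit mat) \<in> carrier_mat d d" and Wi: "Wi \<in> carrier_mat d d" and inv: "Wi * W = 1\<^sub>m d"
  shows "\<exists>N \<ge> 1. W ^\<^sub>m N = 1\<^sub>m d"
proof -
  have "range (\<lambda>t. W ^\<^sub>m t) \<subseteq> carrier_mat d d" using W by auto
  then have "finite (range (\<lambda>t. W ^\<^sub>m t))" using finite_bit_mats finite_subset by blast
  then have "\<not> inj (\<lambda>t. W ^\<^sub>m t)" using finite_imageD infinite_UNIV_nat by blast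
  then obtain i j where ij: "i \<noteq> j" "W ^\<^sub>m i = W ^\<^sub>m j" unfolding inj_def by blast
  have "\<exists>i j. i < j \<and> W ^\<^sub>m i = W ^\<^sub>m j"
  proof (cases "i < j")
    case True then show ?thesis using ij by blast
  next
    case False then have "j < i" using ij by auto
    then show ?thesis using ij by metis
  qed
  then obtain i j where ij: "i < j" "W ^\<^sub>m i = W ^\<^sub>m j" by blast
  have "W ^\<^sub>m (j - i) = (Wi ^\<^sub>m i * W ^\<^sub>m i) * W ^\<^sub>m (j - i)"
    using left_inv_pow[OF W Wi inv] W by simp
  also have "\<dots> = Wi ^\<^sub>m i * (W ^\<^sub>m i * W ^\<^sub>m (j - i))" using W Wi by (simp add: assoc3[of _ d])
  also have "W ^\<^sub>m i * W ^\<^sub>m (j - i) = W ^\<^sub>m j" using pow_add_mat[OF W, of i "j - i"] ij by simp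
  also have "Wi ^\<^sub>m i * W ^\<^sub>m j = 1\<^sub>m d" using left_inv_pow[OF W Wi inv, of i] ij(2) by simp
  finally show ?thesis using ij by (intro exI[of _ "j - i"], auto)
qed



lemma bit_add_self[simp]: "(x::bit) + x = 0"
  using bit_cases2[of x] by auto

lemma Vsub_carrier: "v \<in> Vsub n S \<Longrightarrow> v \<in> carrier_vec (2*n)"
  unfolding Vsub_def by auto

lemma Vsub_zero: "0\<^sub>v (2*n) \<in> Vsub n S"
  unfolding Vsub_def by auto

lemma Vsub_add: "v \<in> Vsub n S \<Longrightarrow> w \<in> Vsub n S \<Longrightarrow> v + w \<in> Vsub n S"
  unfolding Vsub_def by auto

lemma Vsub_mono: "S \<subseteq> T \<Longrightarrow> Vsub n S \<subseteq> Vsub n T"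
  unfolding Vsub_def by auto

lemma VsubI: "v \<in> carrier_vec (2*n) \<Longrightarrow> (\<And>j. j < 2*n \<Longrightarrow> j div 2 \<notin> S \<Longrightarrow> v $ j = 0) \<Longrightarrow> v \<in> Vsub n S"
  unfolding Vsub_def by auto

lemma VsubD: "v \<in> Vsub n S \<Longrightarrow> j < 2*n \<Longrightarrow> j div 2 \<notin> S \<Longrightarrow> v $ j = 0"
  unfolding Vsub_def by auto

definition gen :: "nat \<Rightarrow> bit mat \<Rightarrow> nat set \<Rightarrow> bit vec set" where
  "gen n W S = {(W ^\<^sub>m t) *\<^sub>v v | t v. v \<in> Vsub n S}"

lemma G_int_gen: "G_int n W S C = projS n C ` z2span (2*n) (gen n W S)"
  unfolding G_int_def gen_def ..

lemma span_sub: assumes "0\<^sub>v d \<in> X" "\<And>v w. v \<in> X \<Longrightarrow> w \<in> X \<Longrightarrow> v + w \<in> X" "G \<subseteq> X"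
  shows "z2span d G \<subseteq> X"
proof
  fix x assume "x \<in> z2span d G"
  then show "x \<in> X" by (induct, insert assms, auto)
qed

lemma gen_carrier: "W \<in> carrier_mat (2*n) (2*n) \<Longrightarrow> gen n W S \<subseteq> carrier_vec (2*n)"
proof
  fix x assume W: "W \<in> carrier_mat (2*n) (2*n)" and "x \<in> gen n W S"
  then obtain t v where x: "x = (W ^\<^sub>m t) *\<^sub>v v" and v: "v \<in> Vsub n S" unfolding gen_def by blast
  show "x \<in> carrier_vec (2*n)" unfolding x using W Vsub_carrier[OF v] by (intro mult_mat_vec_carrier[of _ "2*n" "2*n"], auto)
qed

lemma span_carrier: assumes W: "W \<in> carrier_mat (2*n) (2*n)"
  shows "z2span (2*n) (gen n W S) \<subseteq> carrier_vec (2*n)"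
  by (rule span_sub, insert gen_carrier[OF W], auto)

lemma gen_base: assumes W: "W \<in> carrier_mat (2*n) (2*n)" and v: "v \<in> Vsub n S"
  shows "v \<in> gen n W S"
proof -
  have "(W ^\<^sub>m 0) *\<^sub>v v = v" using W Vsub_carrier[OF v] by simp
  then show ?thesis unfolding gen_def using v by (metis (mono_tags, lifting) mem_Collect_eq)
qed

lemma gen_W: assumes W: "W \<in> carrier_mat (2*n) (2*n)" and x: "x \<in> gen n W S"
  shows "W *\<^sub>v x \<in> gen n W S"
proof -
  obtain t v where x: "x = (W ^\<^sub>m t) *\<^sub>v v" and v: "v \<in> Vsub n S" using x unfolding gen_def by blast
  have "W *\<^sub>v x = (W * W ^\<^sub>m t) *\<^sub>v v" unfolding x using W Vsub_carrier[OF v]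
    by (simp add: assoc_mult_mat_vec[of _ "2*n" "2*n" _ "2*n"])
  also have "\<dots> = (W ^\<^sub>m Suc t) *\<^sub>v v" using pow_Suc_left[OF W] by simp
  finally show ?thesis unfolding gen_def using v by blast
qed

lemma mult_zero_vec_mat: "W \<in> carrier_mat nr nc \<Longrightarrow> W *\<^sub>v 0\<^sub>v nc = (0\<^sub>v nr :: 'a::semiring_0 vec)"
  by (intro eq_vecI, auto)

lemma span_W: assumes W: "W \<in> carrier_mat (2*n) (2*n)" and x: "x \<in> z2span (2*n) (gen n W S)"
  shows "W *\<^sub>v x \<in> z2span (2*n) (gen n W S)"
  using x
proof induct
  case zero
  then show ?case using mult_zero_vec_mat[OF W] z2span.zero by metis
next
  case (add v w)
  have v: "v \<in> carrier_vec (2*n)" using add(1) gen_carrier[OF W] by auto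
  have w: "w \<in> carrier_vec (2*n)" using add(2) span_carrier[OF W] by auto
  have "W *\<^sub>v (v + w) = W *\<^sub>v v + W *\<^sub>v w" by (rule mult_add_distrib_mat_vec[OF W v w])
  then show ?case using add gen_W[OF W] z2span.add by metis
qed

lemma span_Wpow: assumes W: "W \<in> carrier_mat (2*n) (2*n)" and x: "x \<in> z2span (2*n) (gen n W S)"
  shows "(W ^\<^sub>m t) *\<^sub>v x \<in> z2span (2*n) (gen n W S)"
proof (induct t)
  case 0
  have "x \<in> carrier_vec (2*n)" using x span_carrier[OF W] by auto
  then show ?case using W x by simp
next
  case (Suc t)
  have xc: "x \<in> carrier_vec (2*n)" using x span_carrier[OF W] by auto
  have "(W ^\<^sub>m Suc t) *\<^sub>v x = W *\<^sub>v ((W ^\<^sub>m t) *\<^sub>v x)"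
    unfolding pow_Suc_left[OF W] using W xc by (simp add: assoc_mult_mat_vec[of _ "2*n" "2*n" _ "2*n"])
  then show ?case using span_W[OF W Suc] by simp
qed



lemma projS_zero: "projS n C (0\<^sub>v (2*n)) = 0\<^sub>v (2*n)"
  unfolding projS_def by (intro eq_vecI, auto)

lemma zero_in_G: "0\<^sub>v (2*n) \<in> G_int n W S C"
  unfolding G_int_gen using projS_zero z2span.zero by (metis image_eqI)

lemma proj_in_span:
  assumes W: "W \<in> carrier_mat (2*n) (2*n)" and s: "s \<in> z2span (2*n) (gen n W S)"
    and sT: "s \<in> Vsub n (S \<union> C)"
  shows "projS n C s \<in> z2span (2*n) (gen n W S)"
proof -
  have sc: "s \<in> carrier_vec (2*n)" using sT Vsub_carrier by auto
  let ?v = "projS n C s"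
  let ?w = "s + ?v"
  have vc: "?v \<in> carrier_vec (2*n)" unfolding projS_def by simp
  have wS: "?w \<in> Vsub n S"
  proof (rule VsubI)
    show "?w \<in> carrier_vec (2*n)" using sc vc by simp
    fix j assume j: "j < 2*n" "j div 2 \<notin> S"
    show "?w $ j = 0"
    proof (cases "j div 2 \<in> C")
      case True then show ?thesis using j sc unfolding projS_def by simp
    next
      case False then show ?thesis using j sc VsubD[OF sT j(1)] unfolding projS_def by simp
    qed
  qed
  have eq: "?w + s = ?v"
  proof (rule eq_vecI)
    fix j assume "j < dim_vec ?v"
    then have j: "j < 2*n" unfolding projS_def by simp
    have "(s $ j + ?v $ j) + s $ j = ?v $ j"
      using bit_cases2[of "s $ j"] bit_cases2[of "?v $ j"] by (auto simp: one_add_one)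
    then show "(?w + s) $ j = ?v $ j" using j sc vc by simp
  qed (insert sc vc, auto)
  have "?w + s \<in> z2span (2*n) (gen n W S)"
    by (rule z2span.add[OF gen_base[OF W wS] s])
  then show ?thesis unfolding eq .
qed

lemma z2_main:
  assumes sym: "symplectic n W" and lw: "left_wall n W {0..<a} {a..<a+k}"
    and G: "G_int n W {0..<a} {a..<a+k} \<inter> G_int n W {a+k..<n} {a..<a+k} \<noteq> {0\<^sub>v (2*n)}"
    and akn: "a + k \<le> n"
  shows "\<exists>v N. v \<in> carrier_vec (2*n) \<and> v \<noteq> 0\<^sub>v (2*n) \<and> N \<ge> 1 \<and> W ^\<^sub>m N = 1\<^sub>m (2*n) \<and> (\<forall>t. W ^\<^sub>m t *\<^sub>v v \<in> Vsub n {a..<a+k})"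
proof -
  let ?L = "{0..<a}" and ?C = "{a..<a+k}" and ?R = "{a+k..<n}"
  let ?J = "sympJ n"
  have W: "W \<in> carrier_mat (2*n) (2*n)" using sym unfolding symplectic_def by auto
  define Wi where "Wi = sympJ n * transpose_mat W * sympJ n"
  note inv = symp_inv[OF sym, folded Wi_def]
  obtain N where N: "N \<ge> 1" "W ^\<^sub>m N = 1\<^sub>m (2*n)" using finite_order[OF W inv(1) inv(3)] by blast
  have sympt: "transpose_mat (W ^\<^sub>m t) * ?J * W ^\<^sub>m t = ?J" for t
    by (rule symp_pow[OF W sympJ_carrier inv(4)])
  have lwall: "W ^\<^sub>m t *\<^sub>v l \<in> Vsub n (?L \<union> ?C)" if l: "l \<in> Vsub n ?L" for t l
  proof (cases "t = 0")
    case True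
    then show ?thesis using W Vsub_carrier[OF l] l Vsub_mono[of ?L "?L \<union> ?C" n] by auto
  next
    case False
    then show ?thesis using lw l unfolding left_wall_def by auto
  qed
  have genL: "gen n W ?L \<subseteq> Vsub n (?L \<union> ?C)"
    unfolding gen_def using lwall by blast
  have spanL: "z2span (2*n) (gen n W ?L) \<subseteq> Vsub n (?L \<union> ?C)"
    by (rule span_sub[OF Vsub_zero _ genL], rule Vsub_add)
  have rwall: "W ^\<^sub>m t *\<^sub>v r \<in> Vsub n (?C \<union> ?R)" if r: "r \<in> Vsub n ?R" for t r
  proof (rule VsubI)
    have rc: "r \<in> carrier_vec (2*n)" using r Vsub_carrier by auto
    let ?x = "W ^\<^sub>m t *\<^sub>v r"
    show xc: "?x \<in> carrier_vec (2*n)" using W rc by (intro mult_mat_vec_carrier[of _ "2*n" "2*n"], auto)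
    fix j assume j: "j < 2*n" "j div 2 \<notin> ?C \<union> ?R"
    have "j div 2 < n" using j(1) by auto
    then have jL: "j div 2 < a" using j(2) by auto
    define j' where "j' = partner j"
    have j': "j' < 2*n" "j' div 2 = j div 2" unfolding j'_def using partner_lt[OF j(1)] by auto
    define e :: "bit vec" where "e = unit_vec (2*n) j'"
    have ec: "e \<in> carrier_vec (2*n)" unfolding e_def by simp
    have eL: "e \<in> Vsub n ?L"
      by (rule VsubI[OF ec], insert j' jL, auto simp: e_def)
    define y where "y = W ^\<^sub>m ((N - 1) * t) *\<^sub>v e"
    have yLC: "y \<in> Vsub n (?L \<union> ?C)" unfolding y_def by (rule lwall[OF eL])
    have yc: "y \<in> carrier_vec (2*n)" using yLC Vsub_carrier by auto
    have "W ^\<^sub>m t *\<^sub>v y = (W ^\<^sub>m t * W ^\<^sub>m ((N - 1) * t)) *\<^sub>v e"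
      unfolding y_def using W ec by (simp add: assoc_mult_mat_vec[of _ "2*n" "2*n" _ "2*n"])
    also have "W ^\<^sub>m t * W ^\<^sub>m ((N - 1) * t) = W ^\<^sub>m (N * t)"
    proof -
      have "t + (N - 1) * t = N * t" using N(1) by (cases N, auto)
      then show ?thesis using pow_add_mat[OF W, of t "(N - 1) * t"] by simp
    qed
    also have "\<dots> = 1\<^sub>m (2*n)" using pow_mult_mat[OF W, of N t] N(2) pow_one_mat by metis
    finally have Wty: "W ^\<^sub>m t *\<^sub>v y = e" using ec by simp
    have Je: "?J *\<^sub>v e = unit_vec (2*n) j"
    proof -
      have "?J *\<^sub>v e = vec (2*n) (\<lambda>i. e $ partner i)" by (rule sympJ_mult_vec[OF ec])
      also have "\<dots> = unit_vec (2*n) j"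
      proof (rule eq_vecI)
        fix i assume "i < dim_vec (unit_vec (2*n) j)"
        then have i: "i < 2*n" by simp
        have "(partner i = j') = (i = j)" unfolding j'_def by (metis partner_partner)
        then show "vec (2*n) (\<lambda>i. e $ partner i) $ i = unit_vec (2*n) j $ i"
          using i j(1) j'(1) partner_lt[OF i] by (simp add: e_def)
      qed simp
      finally show ?thesis .
    qed
    have "?x $ j = ?x \<bullet> (?J *\<^sub>v e)" unfolding Je using j(1) by simp
    also have "\<dots> = ?x \<bullet> (?J *\<^sub>v (W ^\<^sub>m t *\<^sub>v y))" unfolding Wty ..
    also have "\<dots> = r \<bullet> (?J *\<^sub>v y)"
      by (rule sip_invariant[OF pow_carrier_mat[OF W] sympJ_carrier sympt rc yc])
    also have "\<dots> = (\<Sum>i\<in>{0..<2*n}. r $ i * y $ partner i)"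
      unfolding sympJ_mult_vec[OF yc] scalar_prod_def using rc by (intro sum.cong, auto)
    also have "\<dots> = 0"
    proof (rule sum.neutral, intro ballI)
      fix i assume "i \<in> {0..<2*n}"
      then have i: "i < 2*n" by simp
      show "r $ i * y $ partner i = 0"
      proof (cases "i div 2 \<in> ?R")
        case True
        then have "partner i div 2 \<notin> ?L \<union> ?C" by auto
        then have "y $ partner i = 0" using VsubD[OF yLC partner_lt[OF i]] by simp
        then show ?thesis by simp
      next
        case False
        then have "r $ i = 0" using VsubD[OF r i] by simp
        then show ?thesis by simp
      qed
    qed
    finally show "?x $ j = 0" .
  qed
  have genR: "gen n W ?R \<subseteq> Vsub n (?C \<union> ?R)"
    unfolding gen_def using rwall by blast
  have spanR: "z2span (2*n) (gen n W ?R) \<subseteq> Vsub n (?C \<union> ?R)"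
    by (rule span_sub[OF Vsub_zero _ genR], rule Vsub_add)
  let ?A = "G_int n W ?L ?C \<inter> G_int n W ?R ?C"
  have z: "0\<^sub>v (2*n) \<in> ?A" using zero_in_G by auto
  have "\<exists>v. v \<in> ?A \<and> v \<noteq> 0\<^sub>v (2*n)"
  proof (rule ccontr)
    assume "\<not> ?thesis"
    then have "?A = {0\<^sub>v (2*n)}" using z by blast
    then show False using G by simp
  qed
  then obtain v where v: "v \<in> G_int n W ?L ?C" "v \<in> G_int n W ?R ?C" "v \<noteq> 0\<^sub>v (2*n)"
    by blast
  obtain sL where sL: "sL \<in> z2span (2*n) (gen n W ?L)" "v = projS n ?C sL"
    using v(1) unfolding G_int_gen by blast
  obtain sR where sR: "sR \<in> z2span (2*n) (gen n W ?R)" "v = projS n ?C sR"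
    using v(2) unfolding G_int_gen by blast
  have vL: "v \<in> z2span (2*n) (gen n W ?L)"
    unfolding sL(2) by (rule proj_in_span[OF W sL(1)], use spanL sL(1) in auto)
  have "?R \<union> ?C = ?C \<union> ?R" by auto
  then have vR: "v \<in> z2span (2*n) (gen n W ?R)"
    unfolding sR(2) using proj_in_span[OF W sR(1), of ?C] spanR sR(1) by auto
  have "W ^\<^sub>m t *\<^sub>v v \<in> Vsub n ?C" for t
  proof -
    have a1: "W ^\<^sub>m t *\<^sub>v v \<in> Vsub n (?L \<union> ?C)" using span_Wpow[OF W vL] spanL by blast
    have a2: "W ^\<^sub>m t *\<^sub>v v \<in> Vsub n (?C \<union> ?R)" using span_Wpow[OF W vR] spanR by blast
    show ?thesis
    proof (rule VsubI)
      show "W ^\<^sub>m t *\<^sub>v v \<in> carrier_vec (2*n)" using a1 Vsub_carrier by auto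
      fix j assume j: "j < 2*n" "j div 2 \<notin> ?C"
      show "(W ^\<^sub>m t *\<^sub>v v) $ j = 0"
      proof (cases "j div 2 < a")
        case True then show ?thesis using VsubD[OF a2 j(1)] j by auto
      next
        case False then show ?thesis using VsubD[OF a1 j(1)] j by auto
      qed
    qed
  qed
  moreover have "v \<in> carrier_vec (2*n)" using vL span_carrier[OF W] by auto
  ultimately show ?thesis using v(3) N by blast
qed



definition msum :: "nat \<Rightarrow> nat \<Rightarrow> (nat \<Rightarrow> complex mat) \<Rightarrow> nat \<Rightarrow> complex mat" where
  "msum r c f N = mat r c (\<lambda>(i,l). \<Sum>j<N. f j $$ (i,l))"

lemma msum_carrier[simp]: "msum r c f N \<in> carrier_mat r c"
  unfolding msum_def by auto

lemma msum_dims[simp]: "dim_row (msum r c f N) = r" "dim_col (msum r c f N) = c"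
  unfolding msum_def by auto

lemma msum_index[simp]: "i < r \<Longrightarrow> l < c \<Longrightarrow> msum r c f N $$ (i,l) = (\<Sum>j<N. f j $$ (i,l))"
  unfolding msum_def by auto

lemma mult_index: "A \<in> carrier_mat r m \<Longrightarrow> B \<in> carrier_mat m c \<Longrightarrow> i < r \<Longrightarrow> l < c \<Longrightarrow>
  (A * B) $$ (i,l) = (\<Sum>x<m. A $$ (i,x) * B $$ (x,l))"
  by (simp add: scalar_prod_def atLeast0LessThan)

lemma msum_mult_left:
  assumes A: "A \<in> carrier_mat r m" and f: "\<And>j. f j \<in> carrier_mat m c"
  shows "A * msum m c f N = msum r c (\<lambda>j. A * f j) N"
proof (rule eq_matI)
  fix i l assume i: "i < dim_row (msum r c (\<lambda>j. A * f j) N)" and l: "l < dim_col (msum r c (\<lambda>j. A * f j) N)"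
  then have i: "i < r" and l: "l < c" by auto
  have "(A * msum m c f N) $$ (i,l) = (\<Sum>x<m. A $$ (i,x) * (\<Sum>j<N. f j $$ (x,l)))"
    using A i l by (simp add: scalar_prod_def atLeast0LessThan)
  also have "\<dots> = (\<Sum>j<N. \<Sum>x<m. A $$ (i,x) * f j $$ (x,l))"
    by (simp add: sum_distrib_left sum.swap[of _ "{..<N}"])
  also have "\<dots> = (\<Sum>j<N. (A * f j) $$ (i,l))"
    by (intro sum.cong refl, rule mult_index[OF A f i l, symmetric])
  finally show "(A * msum m c f N) $$ (i,l) = msum r c (\<lambda>j. A * f j) N $$ (i,l)" using i l by simp
qed (insert A, auto)

lemma msum_mult_right:
  assumes B: "B \<in> carrier_mat m c" and f: "\<And>j. f j \<in> carrier_mat r m"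
  shows "msum r m f N * B = msum r c (\<lambda>j. f j * B) N"
proof (rule eq_matI)
  fix i l assume i: "i < dim_row (msum r c (\<lambda>j. f j * B) N)" and l: "l < dim_col (msum r c (\<lambda>j. f j * B) N)"
  then have i: "i < r" and l: "l < c" by auto
  have "(msum r m f N * B) $$ (i,l) = (\<Sum>x<m. (\<Sum>j<N. f j $$ (i,x)) * B $$ (x,l))"
    using B i l by (simp add: scalar_prod_def atLeast0LessThan)
  also have "\<dots> = (\<Sum>j<N. \<Sum>x<m. f j $$ (i,x) * B $$ (x,l))"
    by (simp add: sum_distrib_right sum.swap[of _ "{..<N}"])
  also have "\<dots> = (\<Sum>j<N. (f j * B) $$ (i,l))"
    by (intro sum.cong refl, rule mult_index[OF f B i l, symmetric])
  finally show "(msum r m f N * B) $$ (i,l) = msum r c (\<lambda>j. f j * B) N $$ (i,l)" using i l by simp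
qed (insert B, auto)

lemma msum_smult: assumes f: "\<And>j. f j \<in> carrier_mat r c"
  shows "msum r c (\<lambda>j. x \<cdot>\<^sub>m f j) N = x \<cdot>\<^sub>m msum r c f N"
proof (rule eq_matI)
  fix i l assume "i < dim_row (x \<cdot>\<^sub>m msum r c f N)" "l < dim_col (x \<cdot>\<^sub>m msum r c f N)"
  then have i: "i < r" and l: "l < c" by auto
  have "(\<Sum>j<N. (x \<cdot>\<^sub>m f j) $$ (i,l)) = (\<Sum>j<N. x * f j $$ (i,l))"
  proof (intro sum.cong refl)
    fix j show "(x \<cdot>\<^sub>m f j) $$ (i,l) = x * f j $$ (i,l)" using f[of j] i l by simp
  qed
  then show "msum r c (\<lambda>j. x \<cdot>\<^sub>m f j) N $$ (i,l) = (x \<cdot>\<^sub>m msum r c f N) $$ (i,l)"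
    using i l by (simp add: sum_distrib_left)
qed auto

lemma kron_msum_right: assumes f: "\<And>j. f j \<in> carrier_mat r c"
  shows "kron A (msum r c f N) = msum (dim_row A * r) (dim_col A * c) (\<lambda>j. kron A (f j)) N"
proof (rule eq_matI)
  fix i l assume "i < dim_row (msum (dim_row A * r) (dim_col A * c) (\<lambda>j. kron A (f j)) N)"
    "l < dim_col (msum (dim_row A * r) (dim_col A * c) (\<lambda>j. kron A (f j)) N)"
  then have i: "i < dim_row A * r" and l: "l < dim_col A * c" by auto
  have r: "r > 0" and c: "c > 0" using i l by (auto intro: ccontr)
  have fd: "dim_row (f j) = r" "dim_col (f j) = c" for j using f[of j] by auto
  have "kron A (msum r c f N) $$ (i,l) = A $$ (i div r, l div c) * (\<Sum>j<N. f j $$ (i mod r, l mod c))"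
    using i l r c by simp
  also have "\<dots> = (\<Sum>j<N. kron A (f j) $$ (i,l))"
    unfolding sum_distrib_left using i l by (intro sum.cong refl, simp add: fd)
  finally show "kron A (msum r c f N) $$ (i,l) = msum (dim_row A * r) (dim_col A * c) (\<lambda>j. kron A (f j)) N $$ (i,l)"
    using i l by simp
qed auto

lemma kron_msum_left: assumes f: "\<And>j. f j \<in> carrier_mat r c"
  shows "kron (msum r c f N) B = msum (r * dim_row B) (c * dim_col B) (\<lambda>j. kron (f j) B) N"
proof (rule eq_matI)
  fix i l assume "i < dim_row (msum (r * dim_row B) (c * dim_col B) (\<lambda>j. kron (f j) B) N)"
    "l < dim_col (msum (r * dim_row B) (c * dim_col B) (\<lambda>j. kron (f j) B) N)"
  then have i: "i < r * dim_row B" and l: "l < c * dim_col B" by auto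
  have fd: "dim_row (f j) = r" "dim_col (f j) = c" for j using f[of j] by auto
  have "kron (msum r c f N) B $$ (i,l) = (\<Sum>j<N. f j $$ (i div dim_row B, l div dim_col B)) * B $$ (i mod dim_row B, l mod dim_col B)"
    using i l by (simp add: div_lt_aux)
  also have "\<dots> = (\<Sum>j<N. kron (f j) B $$ (i,l))"
    unfolding sum_distrib_right using i l by (intro sum.cong refl, simp add: fd)
  finally show "kron (msum r c f N) B $$ (i,l) = msum (r * dim_row B) (c * dim_col B) (\<lambda>j. kron (f j) B) N $$ (i,l)"
    using i l by simp
qed auto

lemma kron_smult_right: "kron A (x \<cdot>\<^sub>m X) = x \<cdot>\<^sub>m kron A X"
  by (rule eq_matI, auto simp: mod_lt_aux)

lemma kron_smult_left: "kron (x \<cdot>\<^sub>m X) B = x \<cdot>\<^sub>m kron X B"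
  by (rule eq_matI, auto simp: div_lt_aux mod_lt_aux)

lemma adj_dims[simp]: "dim_row (mat_adjoint A) = dim_col A" "dim_col (mat_adjoint A) = dim_row A"
  unfolding mat_adjoint_def by (auto simp: mat_of_rows_def)

lemma adj_carrier: "A \<in> carrier_mat r c \<Longrightarrow> mat_adjoint A \<in> carrier_mat c r"
  unfolding carrier_mat_def by simp

lemma adj_index[simp]: "i < dim_col A \<Longrightarrow> j < dim_row A \<Longrightarrow> mat_adjoint (A :: complex mat) $$ (i,j) = cnj (A $$ (j,i))"
  unfolding mat_adjoint_def by (simp add: mat_of_rows_def)

lemma adj_adj: "mat_adjoint (mat_adjoint (A :: complex mat)) = A"
  by (rule eq_matI, auto)

lemma adj_smult: "mat_adjoint (x \<cdot>\<^sub>m (A :: complex mat)) = cnj x \<cdot>\<^sub>m mat_adjoint A"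
  by (rule eq_matI, auto)

lemma adj_mult: assumes A: "(A :: complex mat) \<in> carrier_mat r m" and B: "B \<in> carrier_mat m c"
  shows "mat_adjoint (A * B) = mat_adjoint B * mat_adjoint A"
proof (rule eq_matI)
  fix i l assume "i < dim_row (mat_adjoint B * mat_adjoint A)" "l < dim_col (mat_adjoint B * mat_adjoint A)"
  then have i: "i < c" and l: "l < r" using A B by auto
  have "mat_adjoint (A * B) $$ (i,l) = cnj (\<Sum>x<m. A $$ (l,x) * B $$ (x,i))"
    using A B i l by (simp add: mult_index[OF A B l i])
  also have "\<dots> = (\<Sum>x<m. mat_adjoint B $$ (i,x) * mat_adjoint A $$ (x,l))"
    using A B i l by (simp add: mult.commute)
  also have "\<dots> = (mat_adjoint B * mat_adjoint A) $$ (i,l)"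
    by (rule mult_index[OF adj_carrier[OF B] adj_carrier[OF A] i l, symmetric])
  finally show "mat_adjoint (A * B) $$ (i,l) = (mat_adjoint B * mat_adjoint A) $$ (i,l)" .
qed (insert A B, auto)

definition tr :: "complex mat \<Rightarrow> complex" where
  "tr M = (\<Sum>i<dim_row M. M $$ (i,i))"

lemma tr_comm: assumes A: "A \<in> carrier_mat r c" and B: "B \<in> carrier_mat c r"
  shows "tr (A * B) = tr (B * A)"
proof -
  have "tr (A * B) = (\<Sum>i<r. (A * B) $$ (i,i))" unfolding tr_def using A by simp
  also have "\<dots> = (\<Sum>i<r. \<Sum>x<c. A $$ (i,x) * B $$ (x,i))"
    by (intro sum.cong refl, rule mult_index[OF A B], auto)
  also have "\<dots> = (\<Sum>x<c. \<Sum>i<r. B $$ (x,i) * A $$ (i,x))"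
    by (subst sum.swap, simp add: mult.commute)
  also have "\<dots> = (\<Sum>x<c. (B * A) $$ (x,x))"
    by (intro sum.cong refl, rule mult_index[OF B A, symmetric], auto)
  also have "\<dots> = tr (B * A)" unfolding tr_def using B by simp
  finally show ?thesis .
qed

definition nrm :: "complex mat \<Rightarrow> complex" where
  "nrm X = tr (X * mat_adjoint X)"

lemma nrm_real: "nrm X = of_real (\<Sum>i<dim_row X. \<Sum>l<dim_col X. (cmod (X $$ (i,l)))\<^sup>2)"
proof -
  have X: "X \<in> carrier_mat (dim_row X) (dim_col X)" by auto
  have "nrm X = (\<Sum>i<dim_row X. (X * mat_adjoint X) $$ (i,i))" unfolding nrm_def tr_def by simp
  also have "\<dots> = (\<Sum>i<dim_row X. \<Sum>l<dim_col X. X $$ (i,l) * cnj (X $$ (i,l)))"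
  proof (intro sum.cong refl)
    fix i assume "i \<in> {..<dim_row X}"
    then have i: "i < dim_row X" by simp
    have "(X * mat_adjoint X) $$ (i,i) = (\<Sum>l<dim_col X. X $$ (i,l) * mat_adjoint X $$ (l,i))"
      by (rule mult_index[OF X adj_carrier[OF X] i i])
    also have "\<dots> = (\<Sum>l<dim_col X. X $$ (i,l) * cnj (X $$ (i,l)))"
      using i by (intro sum.cong refl, simp)
    finally show "(X * mat_adjoint X) $$ (i,i) = (\<Sum>l<dim_col X. X $$ (i,l) * cnj (X $$ (i,l)))" .
  qed
  also have "\<dots> = (\<Sum>i<dim_row X. \<Sum>l<dim_col X. of_real ((cmod (X $$ (i,l)))\<^sup>2))"
    by (intro sum.cong refl, rule complex_norm_square[symmetric])
  finally show ?thesis by (simp only: of_real_sum)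
qed

lemma nrm_nz: assumes "i < dim_row X" "l < dim_col X" "X $$ (i,l) \<noteq> 0"
  shows "nrm X \<noteq> 0"
proof -
  have "(cmod (X $$ (i,l)))\<^sup>2 > 0" using assms by simp
  also have "(cmod (X $$ (i,l)))\<^sup>2 \<le> (\<Sum>l<dim_col X. (cmod (X $$ (i,l)))\<^sup>2)"
    by (rule member_le_sum, insert assms, auto)
  also have "\<dots> \<le> (\<Sum>i<dim_row X. \<Sum>l<dim_col X. (cmod (X $$ (i,l)))\<^sup>2)"
    by (rule member_le_sum[where f = "\<lambda>i. \<Sum>l<dim_col X. (cmod (X $$ (i,l)))\<^sup>2"], insert assms, auto intro: sum_nonneg)
  finally have "0 < (\<Sum>i<dim_row X. \<Sum>l<dim_col X. (cmod (X $$ (i,l)))\<^sup>2)" .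
  then have "complex_of_real (\<Sum>i<dim_row X. \<Sum>l<dim_col X. (cmod (X $$ (i,l)))\<^sup>2) \<noteq> 0"
    by (simp only: of_real_eq_0_iff)
  then show ?thesis unfolding nrm_real .
qed

lemma nrm_smult: "nrm (x \<cdot>\<^sub>m X) = (x * cnj x) * nrm X"
  unfolding nrm_real by (simp add: norm_mult power_mult_distrib sum_distrib_left complex_norm_square[symmetric])

lemma nrm_unitary: assumes U: "U \<in> carrier_mat d d" and VU: "mat_adjoint U * U = 1\<^sub>m d"
  and X: "X \<in> carrier_mat d d"
  shows "nrm (U * X * mat_adjoint U) = nrm X"
proof -
  let ?V = "mat_adjoint U" and ?Xa = "mat_adjoint X"
  have V: "?V \<in> carrier_mat d d" by (rule adj_carrier[OF U])
  have Xa: "?Xa \<in> carrier_mat d d" by (rule adj_carrier[OF X])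
  have UX: "U * X \<in> carrier_mat d d" using U X by (rule sq_mult)
  have cancel: "?V * (U * Y) = Y" if Y: "Y \<in> carrier_mat d d" for Y
    using assoc3[OF V U Y] VU Y by simp
  have "mat_adjoint (U * X * ?V) = mat_adjoint ?V * mat_adjoint (U * X)"
    by (rule adj_mult[OF UX V])
  also have "\<dots> = U * (?Xa * ?V)" unfolding adj_adj adj_mult[OF U X] using assoc3[OF U Xa V] by simp
  finally have adj: "mat_adjoint (U * X * ?V) = U * (?Xa * ?V)" .
  have "U * X * ?V * (U * (?Xa * ?V)) = U * (X * (?V * (U * (?Xa * ?V))))"
    using U X V Xa by (simp add: assoc3[of _ d] sq_mult)
  also have "?V * (U * (?Xa * ?V)) = ?Xa * ?V" by (rule cancel, rule sq_mult[OF Xa V])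
  also have "U * (X * (?Xa * ?V)) = U * ((X * ?Xa) * ?V)" using assoc3[OF X Xa V] by simp
  finally have e: "U * X * ?V * mat_adjoint (U * X * ?V) = U * ((X * ?Xa) * ?V)" unfolding adj .
  have XXa: "X * ?Xa \<in> carrier_mat d d" using X Xa by (rule sq_mult)
  have "nrm (U * X * ?V) = tr (U * ((X * ?Xa) * ?V))" unfolding nrm_def e ..
  also have "\<dots> = tr (((X * ?Xa) * ?V) * U)" by (rule tr_comm[OF U sq_mult[OF XXa V]])
  also have "((X * ?Xa) * ?V) * U = X * ?Xa" using assoc3[OF XXa V U] VU right_mult_one_mat[OF XXa] by simp
  finally show ?thesis unfolding nrm_def .
qed



lemma cis_ne_1: assumes j: "0 < j" "j < N"
  shows "cis (2 * pi * real j / real N) \<noteq> 1"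
proof
  assume "cis (2 * pi * real j / real N) = 1"
  then have "cos (2 * pi * real j / real N) = 1" by (metis cis.sel(1) one_complex.sel(1))
  then obtain m :: int where m: "2 * pi * real j / real N = real_of_int m * 2 * pi"
    using cos_one_2pi_int by blast
  have "real j / real N = real_of_int m" using m pi_gt_zero
    by (metis (no_types, opaque_lifting) mult.commute mult.left_commute nonzero_mult_div_cancel_left
        pi_neq_zero times_divide_eq_right zero_neq_numeral mult_cancel_left)
  moreover have "0 < real j / real N" "real j / real N < 1" using j by auto
  ultimately show False by (metis floor_of_int floor_less_one less_irrefl of_int_0_less_iff
      floor_le_zero not_le)
qed

lemma root_sum: assumes j: "j < N"
  shows "(\<Sum>s<N. cis (2 * pi * real s * real j / real N)) = (if j = 0 then of_nat N else 0)"
proof -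
  let ?z = "cis (2 * pi * real j / real N)"
  have pw: "cis (2 * pi * real s * real j / real N) = ?z ^ s" for s
    by (simp add: DeMoivre algebra_simps)
  show ?thesis
  proof (cases "j = 0")
    case True
    then show ?thesis by simp
  next
    case False
    then have z1: "?z \<noteq> 1" using cis_ne_1 j by simp
    have "?z ^ N = cis (real N * (2 * pi * real j / real N))" by (simp add: DeMoivre)
    also have "real N * (2 * pi * real j / real N) = 2 * pi * real j" using j by simp
    also have "cis (2 * pi * real j) = 1" by (rule cis_multiple_2pi, simp)
    finally have zN: "?z ^ N = 1" .
    have "(\<Sum>s<N. cis (2 * pi * real s * real j / real N)) = (\<Sum>s<N. ?z ^ s)" by (simp only: pw)
    also have "\<dots> = 0" using z1 zN by (simp add: sum_gp_strict)
    finally show ?thesis using False by simp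
  qed
qed

lemma mu_sum: assumes j: "j < N"
  shows "(\<Sum>s<N. cis (- ((phi - 2 * pi * real s) / real N)) ^ j) = (if j = 0 then of_nat N else 0)"
proof -
  have "cis (- ((phi - 2 * pi * real s) / real N)) ^ j
     = cis (- (real j * phi / real N)) * cis (2 * pi * real s * real j / real N)" for s
    by (simp add: DeMoivre cis_mult diff_divide_distrib algebra_simps)
  then have "(\<Sum>s<N. cis (- ((phi - 2 * pi * real s) / real N)) ^ j)
     = cis (- (real j * phi / real N)) * (\<Sum>s<N. cis (2 * pi * real s * real j / real N))"
    by (simp add: sum_distrib_left)
  also have "\<dots> = (if j = 0 then of_nat N else 0)" unfolding root_sum[OF j] by simp
  finally show ?thesis .
qed



definition sh :: "nat \<Rightarrow> nat \<Rightarrow> bit vec \<Rightarrow> bit vec" where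
  "sh a k b = vec (2*k) (\<lambda>i. b $ (2*a+i))"

lemma E_pauli:
  assumes akn: "a + k \<le> n" and b: "b \<in> Vsub n {a..<a+k}"
  shows "kron (kron (1\<^sub>m (2^a)) (pauli k (sh a k b))) (1\<^sub>m (2^(n-a-k))) = pauli n b"
proof -
  have n: "(a+k) + (n-a-k) = n" using akn by simp
  have "pauli ((a+k) + (n-a-k)) b = kron (pauli (a+k) b) (1\<^sub>m (2^(n-a-k)))"
  proof (rule pauli_tail)
    fix j assume j: "2 * (a+k) \<le> j" "j < 2 * ((a+k) + (n-a-k))"
    then have "j < 2*n" "j div 2 \<notin> {a..<a+k}" using n by auto
    then show "b $ j = 0" using VsubD[OF b] by blast
  qed
  moreover have "pauli (a+k) b = kron (1\<^sub>m (2^a)) (pauli k (sh a k b))"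
  proof (rule pauli_shift)
    fix j assume j: "j < 2*a"
    then have "j < 2*n" "j div 2 \<notin> {a..<a+k}" using akn by auto
    then show "b $ j = 0" using VsubD[OF b] by blast
  next
    fix i assume "i < 2*k"
    then show "sh a k b $ i = b $ (2*a+i)" unfolding sh_def by simp
  qed
  ultimately show ?thesis using n by simp
qed

lemma msum_shift: assumes "g N = g 0"
  shows "msum r c (\<lambda>j. g (Suc j)) N = msum r c g N"
proof (rule eq_matI)
  fix i l assume "i < dim_row (msum r c g N)" "l < dim_col (msum r c g N)"
  then have i: "i < r" and l: "l < c" by auto
  have "(\<Sum>j<N. g (Suc j) $$ (i,l)) + g 0 $$ (i,l) = (\<Sum>j<Suc N. g j $$ (i,l))"
    unfolding sum.lessThan_Suc_shift by (simp add: add.commute)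
  also have "\<dots> = (\<Sum>j<N. g j $$ (i,l)) + g 0 $$ (i,l)" using assms by simp
  finally show "msum r c (\<lambda>j. g (Suc j)) N $$ (i,l) = msum r c g N $$ (i,l)" using i l by simp
qed auto

lemma smult_smult_mat: "x \<cdot>\<^sub>m (y \<cdot>\<^sub>m A) = (x * y) \<cdot>\<^sub>m (A :: complex mat)"
  by (rule eq_matI, auto)



theorem lemma4:
  fixes n a k :: nat and U :: "complex mat" and W :: "bit mat"
  assumes "n \<ge> 3" and "a \<ge> 1" and "k \<ge> 1" and "a + k < n"
    and "clifford_with n U W"
    and "left_wall n W {0..<a} {a..<a+k}"
    and "G_int n W {0..<a} {a..<a+k} \<inter> G_int n W {a+k..<n} {a..<a+k} \<noteq> {0\<^sub>v (2*n)}"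
  shows "\<exists>QC \<theta>. QC \<in> carrier_mat (2^k) (2^k) \<and> \<not> (\<exists>c::complex. QC = c \<cdot>\<^sub>m 1\<^sub>m (2^k)) \<and>
     (let Q = kron (kron (1\<^sub>m (2^a)) QC) (1\<^sub>m (2^(n-a-k)))
      in U * Q * mat_adjoint U = exp (\<i> * complex_of_real \<theta>) \<cdot>\<^sub>m Q)"
proof -
  let ?C = "{a..<a+k}"
  have akn: "a + k \<le> n" using assms(4) by simp
  have sym: "symplectic n W" and Uu: "unitary_mat (2^n) U"
    and cl: "\<forall>b\<in>carrier_vec (2*n). \<exists>c. U * pauli n b * mat_adjoint U = c \<cdot>\<^sub>m pauli n (W *\<^sub>v b)"
    using assms(5) unfolding clifford_with_def by auto
  have U: "U \<in> carrier_mat (2^n) (2^n)" and UU: "mat_adjoint U * U = 1\<^sub>m (2^n)"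
    using Uu unfolding unitary_mat_def by auto
  have W: "W \<in> carrier_mat (2*n) (2*n)" using sym unfolding symplectic_def by auto
  obtain v N where vc: "v \<in> carrier_vec (2*n)" and v0: "v \<noteq> 0\<^sub>v (2*n)" and N1: "N \<ge> 1"
    and WN: "W ^\<^sub>m N = 1\<^sub>m (2*n)" and vC: "\<And>t. W ^\<^sub>m t *\<^sub>v v \<in> Vsub n ?C"
    using z2_main[OF sym assms(6) assms(7) akn] by blast
  define vv where "vv j = W ^\<^sub>m j *\<^sub>v v" for j
  have vvC: "vv j \<in> Vsub n ?C" for j unfolding vv_def by (rule vC)
  have vvc: "vv j \<in> carrier_vec (2*n)" for j using vvC[of j] Vsub_carrier by auto
  have vvS: "W *\<^sub>v vv j = vv (Suc j)" for j
    unfolding vv_def pow_Suc_left[OF W] using W vc by (simp add: assoc_mult_mat_vec[of _ "2*n" "2*n" _ "2*n"])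
  have vvN: "vv N = v" unfolding vv_def WN using vc by simp
  have vv0: "vv 0 = v" unfolding vv_def using W vc by simp
  define P where "P j = pauli n (vv j)" for j
  have Pc: "P j \<in> carrier_mat (2^n) (2^n)" for j unfolding P_def by simp
  have "\<forall>j. \<exists>c. U * P j * mat_adjoint U = c \<cdot>\<^sub>m P (Suc j)"
  proof
    fix j
    show "\<exists>c. U * P j * mat_adjoint U = c \<cdot>\<^sub>m P (Suc j)"
      using cl vvc[of j] unfolding P_def vvS[symmetric] by blast
  qed
  then have "\<exists>\<gamma>. \<forall>j. U * P j * mat_adjoint U = \<gamma> j \<cdot>\<^sub>m P (Suc j)" by (rule choice)
  then obtain \<gamma> where \<gamma>: "\<And>j. U * P j * mat_adjoint U = \<gamma> j \<cdot>\<^sub>m P (Suc j)" by blast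
  define d where "d j = (\<Prod>i<j. \<gamma> i)" for j
  have dS: "d (Suc j) = d j * \<gamma> j" for j unfolding d_def by simp
  have d0: "d 0 = 1" unfolding d_def by simp
  have nrmP: "nrm (P 0) = (d j * cnj (d j)) * nrm (P j)" for j
  proof (induct j)
    case 0 show ?case by (simp add: d0)
  next
    case (Suc j)
    have "nrm (P j) = nrm (U * P j * mat_adjoint U)" by (rule nrm_unitary[OF U UU Pc, symmetric])
    also have "\<dots> = (\<gamma> j * cnj (\<gamma> j)) * nrm (P (Suc j))" unfolding \<gamma> nrm_smult ..
    finally show ?case using Suc by (simp add: dS algebra_simps)
  qed
  have PN: "P N = P 0" unfolding P_def vvN vv0 ..
  have nsv: "\<exists>j<2*n. v $ j \<noteq> 0"
  proof (rule ccontr)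
    assume "\<not> ?thesis"
    then have "v = 0\<^sub>v (2*n)" using vc by (intro eq_vecI, auto)
    with v0 show False by simp
  qed
  have "ns (2^n) (P 0)" unfolding P_def vv0 by (rule ns_pauli[OF nsv])
  then obtain i l where il: "i < 2^n" "l < 2^n" "P 0 $$ (i,l) \<noteq> 0" using ns_nonzero by blast
  have nz: "nrm (P 0) \<noteq> 0" by (rule nrm_nz[of i _ l], use il Pc[of 0] in auto)
  have dd: "d N * cnj (d N) = 1"
  proof -
    have "nrm (P 0) = (d N * cnj (d N)) * nrm (P 0)" using nrmP[of N] unfolding PN .
    then show ?thesis using nz by simp
  qed
  obtain \<phi> where dN: "d N = cis \<phi>"
  proof -
    have "complex_of_real ((Re (d N))\<^sup>2 + (Im (d N))\<^sup>2) = 1" using dd complex_mult_cnj[of "d N"] by simp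
    then have "(Re (d N))\<^sup>2 + (Im (d N))\<^sup>2 = 1" by (simp only: of_real_eq_1_iff)
    then obtain t where "Re (d N) = cos t" "Im (d N) = sin t" using sincos_total_2pi by metis
    then have "d N = cis t" by (intro complex_eqI, auto)
    then show ?thesis using that by blast
  qed
  define \<theta> where "\<theta> s = (\<phi> - 2 * pi * real s) / real N" for s
  define \<mu> where "\<mu> s = cis (- \<theta> s)" for s
  define coef where "coef s j = \<mu> s ^ j * d j" for s j
  have coefN: "coef s N = 1" for s
  proof -
    have "\<mu> s ^ N = cis (real N * (- \<theta> s))" unfolding \<mu>_def by (rule DeMoivre)
    also have "real N * (- \<theta> s) = - (\<phi> - 2 * pi * real s)" unfolding \<theta>_def using N1 by simp
    finally have "coef s N = cis (- (\<phi> - 2 * pi * real s)) * cis \<phi>" unfolding coef_def dN by simp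
    also have "\<dots> = cis (2 * pi * real s)" by (simp add: cis_mult)
    also have "\<dots> = 1" by (rule cis_multiple_2pi, simp)
    finally show ?thesis .
  qed
  have coef0: "coef s 0 = 1" for s unfolding coef_def d0 by simp
  have coefS: "coef s j * \<gamma> j = inverse (\<mu> s) * coef s (Suc j)" for s j
  proof -
    have "\<mu> s \<noteq> 0" unfolding \<mu>_def by simp
    then show ?thesis unfolding coef_def dS by (simp add: field_simps)
  qed
  have muinv: "inverse (\<mu> s) = exp (\<i> * complex_of_real (\<theta> s))" for s
  proof -
    have "inverse (\<mu> s) = cis (\<theta> s)" unfolding \<mu>_def cis_inverse by simp
    then show ?thesis by (simp only: cis_conv_exp)
  qed
  define p where "p j = pauli k (sh a k (vv j))" for j
  have pc: "p j \<in> carrier_mat (2^k) (2^k)" for j unfolding p_def by simp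
  have pd: "dim_row (p j) = 2^k" "dim_col (p j) = 2^k" for j unfolding p_def by simp_all
  define E where "E X = kron (kron (1\<^sub>m (2^a)) X) (1\<^sub>m (2^(n-a-k)))" for X
  have Ep: "E (p j) = P j" for j unfolding E_def p_def P_def by (rule E_pauli[OF akn vvC])
  have dims: "2^a * 2^k * 2^(n-a-k) = (2::nat)^n" using akn by (simp flip: power_add)
  define QC where "QC s = msum (2^k) (2^k) (\<lambda>j. coef s j \<cdot>\<^sub>m p j) N" for s
  have QCc: "QC s \<in> carrier_mat (2^k) (2^k)" for s unfolding QC_def by simp
  have EQ: "E (QC s) = msum (2^n) (2^n) (\<lambda>j. coef s j \<cdot>\<^sub>m P j) N" for s
  proof -
    have f1: "coef s j \<cdot>\<^sub>m p j \<in> carrier_mat (2^k) (2^k)" for j using pc by simp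
    have f2: "kron (1\<^sub>m (2^a)) (coef s j \<cdot>\<^sub>m p j) \<in> carrier_mat (2^a * 2^k) (2^a * 2^k)" for j
      using kron_carrier[of "1\<^sub>m (2^a)" "coef s j \<cdot>\<^sub>m p j"] pd by simp
    have "E (QC s) = kron (msum (2^a * 2^k) (2^a * 2^k) (\<lambda>j. kron (1\<^sub>m (2^a)) (coef s j \<cdot>\<^sub>m p j)) N) (1\<^sub>m (2^(n-a-k)))"
      unfolding E_def QC_def kron_msum_right[OF f1] by simp
    also have "\<dots> = msum (2^a*2^k*2^(n-a-k)) (2^a*2^k*2^(n-a-k))
        (\<lambda>j. kron (kron (1\<^sub>m (2^a)) (coef s j \<cdot>\<^sub>m p j)) (1\<^sub>m (2^(n-a-k)))) N"
      unfolding kron_msum_left[OF f2] by simp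
    also have "\<dots> = msum (2^n) (2^n) (\<lambda>j. coef s j \<cdot>\<^sub>m P j) N"
      unfolding dims kron_smult_right kron_smult_left Ep[symmetric] E_def ..
    finally show ?thesis .
  qed
  have eig: "U * E (QC s) * mat_adjoint U = exp (\<i> * complex_of_real (\<theta> s)) \<cdot>\<^sub>m E (QC s)" for s
  proof -
    have fc: "coef s j \<cdot>\<^sub>m P j \<in> carrier_mat (2^n) (2^n)" for j using Pc by simp
    have Uc': "U * (coef s j \<cdot>\<^sub>m P j) \<in> carrier_mat (2^n) (2^n)" for j using U fc by (rule mult_carrier_mat)
    have "U * E (QC s) * mat_adjoint U = msum (2^n) (2^n) (\<lambda>j. U * (coef s j \<cdot>\<^sub>m P j) * mat_adjoint U) N"
      unfolding EQ msum_mult_left[OF U fc] msum_mult_right[OF adj_carrier[OF U] Uc'] ..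
    also have "\<dots> = msum (2^n) (2^n) (\<lambda>j. inverse (\<mu> s) \<cdot>\<^sub>m (coef s (Suc j) \<cdot>\<^sub>m P (Suc j))) N"
    proof -
      have "U * (coef s j \<cdot>\<^sub>m P j) * mat_adjoint U = inverse (\<mu> s) \<cdot>\<^sub>m (coef s (Suc j) \<cdot>\<^sub>m P (Suc j))" for j
      proof -
        have "U * (coef s j \<cdot>\<^sub>m P j) * mat_adjoint U = coef s j \<cdot>\<^sub>m (U * P j * mat_adjoint U)"
          unfolding mult_smult_distrib[OF U Pc] 
          by (rule mult_smult_assoc_mat[OF mult_carrier_mat[OF U Pc] adj_carrier[OF U]])
        also have "\<dots> = (coef s j * \<gamma> j) \<cdot>\<^sub>m P (Suc j)" unfolding \<gamma> smult_smult_mat ..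
        also have "\<dots> = inverse (\<mu> s) \<cdot>\<^sub>m (coef s (Suc j) \<cdot>\<^sub>m P (Suc j))" unfolding coefS smult_smult_mat ..
        finally show ?thesis .
      qed
      then show ?thesis by simp
    qed
    also have "\<dots> = inverse (\<mu> s) \<cdot>\<^sub>m msum (2^n) (2^n) (\<lambda>j. coef s (Suc j) \<cdot>\<^sub>m P (Suc j)) N"
      by (rule msum_smult, simp add: Pc)
    also have "msum (2^n) (2^n) (\<lambda>j. coef s (Suc j) \<cdot>\<^sub>m P (Suc j)) N = msum (2^n) (2^n) (\<lambda>j. coef s j \<cdot>\<^sub>m P j) N"
      by (rule msum_shift[of "\<lambda>j. coef s j \<cdot>\<^sub>m P j"], simp add: coefN coef0 PN)
    finally show ?thesis unfolding EQ muinv .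
  qed
  have nsp: "ns (2^k) (p 0)"
  proof -
    obtain j where j: "j < 2*n" "v $ j \<noteq> 0" using nsv by blast
    have "j div 2 \<in> ?C" using VsubD[OF vvC[of 0] j(1)] j(2) unfolding vv0 by blast
    then have j2: "2*a \<le> j" "j - 2*a < 2*k" by auto
    have "sh a k (vv 0) $ (j - 2*a) \<noteq> 0" unfolding sh_def vv0 using j j2 by simp
    then have "\<exists>i<2*k. sh a k (vv 0) $ i \<noteq> 0" using j2 by blast
    then show ?thesis unfolding p_def by (rule ns_pauli)
  qed
  have "\<exists>s<N. \<not> (\<exists>c. QC s = c \<cdot>\<^sub>m 1\<^sub>m (2^k))"
  proof (rule ccontr)
    assume "\<not> ?thesis"
    then have "\<forall>s<N. \<exists>c. QC s = c \<cdot>\<^sub>m 1\<^sub>m (2^k)" by blast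
    then obtain cs where cs: "\<And>s. s < N \<Longrightarrow> QC s = cs s \<cdot>\<^sub>m 1\<^sub>m (2^k)" by metis
    have "p 0 = ((\<Sum>s<N. cs s) / of_nat N) \<cdot>\<^sub>m 1\<^sub>m (2^k)"
    proof (rule eq_matI)
      fix i l assume "i < dim_row (((\<Sum>s<N. cs s) / of_nat N) \<cdot>\<^sub>m 1\<^sub>m (2^k))"
        "l < dim_col (((\<Sum>s<N. cs s) / of_nat N) \<cdot>\<^sub>m 1\<^sub>m (2^k))"
      then have i: "i < 2^k" and l: "l < 2^k" by auto
      have "(\<Sum>s<N. QC s $$ (i,l)) = (\<Sum>s<N. \<Sum>j<N. coef s j * p j $$ (i,l))"
        unfolding QC_def using i l by (simp add: pd)
      also have "\<dots> = (\<Sum>j<N. (\<Sum>s<N. \<mu> s ^ j) * (d j * p j $$ (i,l)))"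
        unfolding coef_def by (subst sum.swap, simp add: sum_distrib_right mult.assoc)
      also have "\<dots> = (\<Sum>j<N. (if j = 0 then of_nat N else 0) * (d j * p j $$ (i,l)))"
        by (intro sum.cong refl, simp add: \<mu>_def \<theta>_def mu_sum)
      also have "\<dots> = (\<Sum>j<N. if j = 0 then of_nat N * p 0 $$ (i,l) else 0)"
        by (intro sum.cong refl, simp add: d0)
      also have "\<dots> = of_nat N * p 0 $$ (i,l)" using N1 by (subst sum.delta, auto)
      finally have A: "(\<Sum>s<N. QC s $$ (i,l)) = of_nat N * p 0 $$ (i,l)" .
      have "(\<Sum>s<N. QC s $$ (i,l)) = (\<Sum>s<N. cs s * (if i = l then 1 else 0))"
        by (intro sum.cong refl, simp add: cs i l)
      also have "\<dots> = (\<Sum>s<N. cs s) * (if i = l then 1 else 0)" by (simp add: sum_distrib_right)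
      finally have B: "of_nat N * p 0 $$ (i,l) = (\<Sum>s<N. cs s) * (if i = l then 1 else 0)" using A by simp
      have "of_nat N \<noteq> (0::complex)" using N1 by simp
      then show "p 0 $$ (i,l) = (((\<Sum>s<N. cs s) / of_nat N) \<cdot>\<^sub>m 1\<^sub>m (2^k)) $$ (i,l)"
        using B i l by (simp add: field_simps)
    qed (simp_all add: pd)
    then show False using ns_not_scalar[OF nsp] by blast
  qed
  then obtain s where s: "s < N" "\<not> (\<exists>c. QC s = c \<cdot>\<^sub>m 1\<^sub>m (2^k))" by blast
  show ?thesis
    by (rule exI[of _ "QC s"], rule exI[of _ "\<theta> s"], insert QCc[of s] s(2) eig[of s], unfold E_def Let_def, simp)
qed


end
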